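(* For integers $N\ge 1$ and $n\ge 1$, $$B_{N,n}=(-1)^n\,n!\,\det\big(c_{ij}\big)_{1\le i,j\le n},$$ where $c_{ij}=\dfrac{N!}{(N+i-j+1)!}$ if $j\le i$, $c_{ij}=1$ if $j=i+1$, and $c_{ij}=0$ if $j>i+1$. That is, the matrix has $\frac{N!}{(N+1)!}$ on the diagonal, $1$ on the superdiagonal, zeros above the superdiagonal, and $\frac{N!}{(N+k+1)!}$ on the $k$-th subdiagonal.
   Context: For a positive integer $N$, the hypergeometric Bernoulli numbers $B_{N,n}$ ($n\ge 0$) are defined by $$\frac{x^N/N!}{e^x-\sum_{n=0}^{N-1}x^n/n!}=\sum_{n=0}^\infty B_{N,n}\frac{x^n}{n!}.$$ *)

theory Defs
  imports "HOL-Computational_Algebra.Formal_Power_Series" "Jordan_Normal_Form.Determinant"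
begin

definition hyp_bernoulli :: "nat \<Rightarrow> nat \<Rightarrow> real" where
  "hyp_bernoulli N n = fact n * fps_nth
     ((fps_X ^ N / fps_const (fact N)) /
      (fps_exp 1 - (\<Sum>k<N. fps_const (1 / fact k) * fps_X ^ k))) n"

text \<open>The n x n matrix (c_ij) (0-based indices; entries depend only on i - j).\<close>
definition hb_matrix :: "nat \<Rightarrow> nat \<Rightarrow> real mat" where
  "hb_matrix N n = mat n n (\<lambda>(i, j).
     if j \<le> i then fact N / fact (N + (i - j) + 1)
     else if j = i + 1 then 1 else 0)"

end

theory Submission imports Defs begin

definition Aser :: "nat \<Rightarrow> real fps" where
  "Aser N = Abs_fps (\<lambda>m. 1 / fact (N + m))"

lemma denom_eq: "fps_exp 1 - (\<Sum>k<N. fps_const (1 / fact k) * fps_X ^ k) = Aser N * fps_X ^ N"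
proof (rule fps_ext)
  fix n
  have "fps_nth (\<Sum>k<N. fps_const (1 / fact k) * fps_X ^ k) n = (if n < N then 1 / fact n else (0::real))"
    by (simp add: fps_sum_nth if_distrib[of "\<lambda>x. x / _"] cong: if_cong)
  then show "fps_nth (fps_exp 1 - (\<Sum>k<N. fps_const (1 / fact k) * fps_X ^ k)) n = fps_nth (Aser N * fps_X ^ N) n"
    by (auto simp: fps_X_power_mult_right_nth Aser_def)
qed

lemma quot_eq: "(fps_X ^ N / fps_const (fact N)) /
      (fps_exp 1 - (\<Sum>k<N. fps_const (1 / fact k) * fps_X ^ k)) * Aser N = fps_const (1 / fact N)"
proof -
  have A0: "fps_nth (Aser N) 0 \<noteq> 0" by (simp add: Aser_def)
  hence Anz: "Aser N \<noteq> 0" by auto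
  have "fps_X ^ N / fps_const (fact N) = fps_const (1 / fact N) * (fps_X ^ N :: real fps)"
    by (simp add: inverse_eq_divide)
  hence "(fps_X ^ N / fps_const (fact N)) /
      (fps_exp 1 - (\<Sum>k<N. fps_const (1 / fact k) * fps_X ^ k)) = fps_const (1 / fact N) / Aser N"
    by (simp add: denom_eq fps_divide_cancel)
  moreover have "fps_const (1 / fact N) / Aser N * Aser N = fps_const (1 / fact N)"
    using A0 Anz by (intro fps_times_divide_eq) (auto simp: subdegree_eq_0_iff)
  ultimately show ?thesis by simp
qed

definition Gm :: "(nat \<Rightarrow> real) \<Rightarrow> nat \<Rightarrow> real mat" where
  "Gm f n = mat n n (\<lambda>(i, j). if j \<le> i then f (i - j) else if j = i + 1 then 1 else 0)"

definition Lm :: "(nat \<Rightarrow> real) \<Rightarrow> nat \<Rightarrow> real mat" where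
  "Lm f n = mat n n (\<lambda>(r, c). if c < r then f (r - Suc c) else if c = r then 1 else 0)"

lemma det_Lm: "det (Lm f n) = 1"
proof -
  have "det (Lm f n) = prod_list (diag_mat (Lm f n))"
    by (rule det_lower_triangular[where n=n]) (auto simp: Lm_def)
  also have "diag_mat (Lm f n) = replicate n 1"
    by (auto simp: diag_mat_def Lm_def intro!: nth_equalityI)
  finally show ?thesis by simp
qed

lemma delete_eq:
  assumes "i \<le> m"
  shows "mat_delete (Gm f (Suc m)) i 0 =
    four_block_mat (Lm f i) (0\<^sub>m i (m - i)) (mat (m - i) i (\<lambda>(r, c). f (r + i - c))) (Gm f (m - i))"
  using assms
  by (intro eq_matI) (auto simp: mat_delete_def Gm_def Lm_def)

lemma det_Gm_rec: "det (Gm f (Suc m)) = (\<Sum>i<Suc m. (-1)^i * f i * det (Gm f (m - i)))"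
proof -
  have C: "Gm f (Suc m) \<in> carrier_mat (Suc m) (Suc m)" by (simp add: Gm_def)
  have "det (Gm f (Suc m)) = (\<Sum>i<Suc m. Gm f (Suc m) $$ (i, 0) * cofactor (Gm f (Suc m)) i 0)"
    by (rule laplace_expansion_column[OF C]) simp
  also have "\<dots> = (\<Sum>i<Suc m. (-1)^i * f i * det (Gm f (m - i)))"
  proof (rule sum.cong[OF refl])
    fix i assume "i \<in> {..<Suc m}"
    hence im: "i \<le> m" by auto
    have "det (mat_delete (Gm f (Suc m)) i 0) = det (Lm f i) * det (Gm f (m - i))"
      unfolding delete_eq[OF im]
      by (rule det_four_block_mat_upper_right_zero) (auto simp: Lm_def Gm_def)
    thus "Gm f (Suc m) $$ (i, 0) * cofactor (Gm f (Suc m)) i 0 = (-1)^i * f i * det (Gm f (m - i))"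
      using im by (simp add: cofactor_def det_Lm Gm_def)
  qed
  finally show ?thesis .
qed

lemma Gm_0: "det (Gm f 0) = 1"
proof -
  have "Gm f 0 = 1\<^sub>m 0" by (intro eq_matI) (auto simp: Gm_def)
  thus ?thesis by simp
qed

lemma main_rec:
  fixes N :: nat
  defines "Q \<equiv> (fps_X ^ N / fps_const (fact N)) /
      (fps_exp 1 - (\<Sum>k<N. fps_const (1 / fact k) * fps_X ^ k))"
  defines "f \<equiv> (\<lambda>k. fact N / fact (N + k + 1) :: real)"
  shows "fps_nth Q n = (-1) ^ n * det (Gm f n)"
proof (induction n rule: less_induct)
  case (less n)
  have QA: "Q * Aser N = fps_const (1 / fact N)" unfolding Q_def by (rule quot_eq)
  have coef: "(\<Sum>i=0..n. fps_nth Q i * fps_nth (Aser N) (n - i)) = (if n = 0 then 1 / fact N else 0)"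
    using arg_cong[OF QA, of "\<lambda>F. fps_nth F n"] by (simp add: fps_mult_nth)
  show ?case
  proof (cases n)
    case 0
    with coef show ?thesis by (simp add: Aser_def Gm_0)
  next
    case (Suc m)
    have "(\<Sum>i=0..Suc m. fps_nth Q i * fps_nth (Aser N) (Suc m - i))
        = (\<Sum>i=0..m. fps_nth Q i * fps_nth (Aser N) (Suc m - i)) + fps_nth Q (Suc m) / fact N"
      by (simp add: Aser_def)
    with coef Suc have e1: "fps_nth Q (Suc m) = - fact N * (\<Sum>i=0..m. fps_nth Q i * fps_nth (Aser N) (Suc m - i))"
      by (simp add: field_simps)
    have "(\<Sum>i=0..m. fps_nth Q i * fps_nth (Aser N) (Suc m - i))
        = (\<Sum>k=0..m. fps_nth Q (m - k) * fps_nth (Aser N) (Suc k))"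
      by (rule sum.reindex_bij_witness[of _ "\<lambda>k. m - k" "\<lambda>i. m - i"]) (auto simp: Suc_diff_le)
    also have "\<dots> = (\<Sum>k=0..m. (-1) ^ (m - k) * det (Gm f (m - k)) * (f k / fact N))"
    proof (rule sum.cong[OF refl])
      fix k assume k: "k \<in> {0..m}"
      have "fps_nth Q (m - k) = (-1) ^ (m - k) * det (Gm f (m - k))"
        using less.IH[of "m - k"] Suc by simp
      moreover have "fps_nth (Aser N) (Suc k) = f k / fact N"
        by (simp add: Aser_def f_def)
      ultimately show "fps_nth Q (m - k) * fps_nth (Aser N) (Suc k) = (-1) ^ (m - k) * det (Gm f (m - k)) * (f k / fact N)"
        by simp
    qed
    finally have e2: "fps_nth Q (Suc m) = - (\<Sum>k=0..m. (-1) ^ (m - k) * det (Gm f (m - k)) * f k)"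
      using e1 by (simp add: sum_distrib_left sum_negf)
    have "(-1) ^ Suc m * det (Gm f (Suc m)) = (\<Sum>k<Suc m. (-1) ^ Suc m * ((-1)^k * f k * det (Gm f (m - k))))"
      by (simp only: det_Gm_rec sum_distrib_left)
    also have "\<dots> = (\<Sum>k=0..m. - ((-1) ^ (m - k) * det (Gm f (m - k)) * f k))"
    proof (rule sum.cong)
      show "{..<Suc m} = {0..m}" by auto
    next
      fix k assume "k \<in> {0..m}"
      hence km: "k \<le> m" by auto
      have "(-1::real) ^ Suc m * (-1) ^ k = - ((-1) ^ (m - k) * ((-1) ^ k * (-1) ^ k))"
      proof -
        obtain d where d: "m = k + d" using km le_Suc_ex by blast
        show ?thesis unfolding d by (simp add: power_add)
      qed
      also have "\<dots> = - ((-1) ^ (m - k))" by (simp add: power_add[symmetric])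
      finally show "(-1) ^ Suc m * ((-1)^k * f k * det (Gm f (m - k))) = - ((-1) ^ (m - k) * det (Gm f (m - k)) * f k)"
        by (metis (no_types, lifting) mult.assoc mult.commute mult_minus_left)
    qed
    finally show ?thesis using e2 Suc by (simp add: sum_negf)
  qed
qed

theorem theorem1:
  fixes N n :: nat
  assumes "N \<ge> 1" and "n \<ge> 1"
  shows "hyp_bernoulli N n = (-1) ^ n * fact n * det (hb_matrix N n)"
proof -
  have "hb_matrix N n = Gm (\<lambda>k. fact N / fact (N + k + 1)) n"
    unfolding hb_matrix_def Gm_def by (rule refl)
  thus ?thesis unfolding hyp_bernoulli_def using main_rec[of N n] by simp
qed

end
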